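(* Let $S\subseteq\mathbb{N}^k$ be a slice. There is a finite set $F\subseteq S$ such that $S=\bigcup_{\mathbf{u}\in F}(\mathbf{u}+M_{\mathbf{u}})$.
   Context: $\le$ is the componentwise order on $\mathbb{N}^k$; for $X\subseteq\mathbb{N}^k$, $\min X$ is the (finite) set of its minimal elements and $X^*$ the submonoid generated by $X$. A slice is a set $S\subseteq\mathbb{N}^k$ such that whenever $\mathbf{u},\mathbf{u}+\mathbf{v},\mathbf{u}+\mathbf{w}\in S$ for $\mathbf{u},\mathbf{v},\mathbf{w}\in\mathbb{N}^k$, then $\mathbf{u}+\mathbf{v}+\mathbf{w}\in S$. For $\mathbf{u}\in S$ let $S-\mathbf{u}=\{\mathbf{v}\in\mathbb{N}^k\mid\mathbf{u}+\mathbf{v}\in S\}$ and $M_{\mathbf{u}}=(\min((S-\mathbf{u})\setminus\{\mathbf{0}\}))^*$. *)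

theory Defs
  imports Main "HOL-Library.Function_Algebras"
begin

text \<open>Vectors in N^k are modelled as functions 'k \<Rightarrow> nat for a finite index type 'k
  (k = CARD('k)). Addition is pointwise (Function_Algebras) and the order \<le> on
  functions is the pointwise (componentwise) order from Main.\<close>

definition slice :: "('k \<Rightarrow> nat) set \<Rightarrow> bool" where
  "slice S \<longleftrightarrow> (\<forall>u v w. u \<in> S \<longrightarrow> u + v \<in> S \<longrightarrow> u + w \<in> S \<longrightarrow> u + v + w \<in> S)"

definition minimal_elems :: "('k \<Rightarrow> nat) set \<Rightarrow> ('k \<Rightarrow> nat) set" where
  "minimal_elems X = {x \<in> X. \<forall>y \<in> X. y \<le> x \<longrightarrow> y = x}"

inductive_set submonoid_gen :: "('k \<Rightarrow> nat) set \<Rightarrow> ('k \<Rightarrow> nat) set" for X where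
  zero: "0 \<in> submonoid_gen X"
| gen: "x \<in> X \<Longrightarrow> x \<in> submonoid_gen X"
| add: "a \<in> submonoid_gen X \<Longrightarrow> b \<in> submonoid_gen X \<Longrightarrow> a + b \<in> submonoid_gen X"

definition shift :: "('k \<Rightarrow> nat) set \<Rightarrow> ('k \<Rightarrow> nat) \<Rightarrow> ('k \<Rightarrow> nat) set" where
  "shift S u = {v. u + v \<in> S}"

definition M_of :: "('k \<Rightarrow> nat) set \<Rightarrow> ('k \<Rightarrow> nat) \<Rightarrow> ('k \<Rightarrow> nat) set" where
  "M_of S u = submonoid_gen (minimal_elems (shift S u - {0}))"

end

theory Submission imports Defs Complex_Main begin

lemma nat_seq_incr_sub:
  fixes h :: "nat \<Rightarrow> nat"
  shows "\<exists>r::nat\<Rightarrow>nat. strict_mono r \<and> (\<forall>i j. i \<le> j \<longrightarrow> h (r i) \<le> h (r j))"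
proof -
  obtain r where r: "strict_mono r" "monoseq (\<lambda>n. h (r n))" using seq_monosub[of h] by blast
  show ?thesis
  proof (cases "\<forall>m n. m \<le> n \<longrightarrow> h (r m) \<le> h (r n)")
    case True then have "strict_mono r \<and> (\<forall>i j. i \<le> j \<longrightarrow> h (r i) \<le> h (r j))" using r(1) by simp
    then show ?thesis by (rule exI[where x=r])
  next
    case False
    then have dec: "\<forall>m n. m \<le> n \<longrightarrow> h (r n) \<le> h (r m)" using r(2) unfolding monoseq_def by blast
    obtain N where N: "\<forall>n. h (r N) \<le> h (r n)"
      using ex_has_least_nat[of "\<lambda>n. True" 0 "\<lambda>n. h (r n)"] by blast
    have c: "\<And>n. h (r (n + N)) = h (r N)" proof -
      fix n have "h (r (n + N)) \<le> h (r N)" using dec by simp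
      then show "h (r (n + N)) = h (r N)" using N[rule_format, of "n+N"] by linarith
    qed
    have "strict_mono (\<lambda>n. r (n + N))" using r(1) unfolding strict_mono_def by simp
    then show ?thesis using c by (intro exI[of _ "\<lambda>n. r (n + N)"] conjI) simp_all
  qed
qed

lemma dickson_sub:
  fixes f :: "nat \<Rightarrow> ('k \<Rightarrow> nat)"
  assumes "finite I"
  shows "\<exists>g::nat\<Rightarrow>nat. strict_mono g \<and> (\<forall>i j. i \<le> j \<longrightarrow> (\<forall>x\<in>I. f (g i) x \<le> f (g j) x))"
  using assms
proof (induction I rule: finite_induct)
  case empty
  show ?case by (rule exI[of _ "\<lambda>n. n"]) (simp add: strict_mono_def)
next
  case (insert a I)
  then obtain g :: "nat \<Rightarrow> nat" where g: "strict_mono g" "\<forall>i j. i \<le> j \<longrightarrow> (\<forall>x\<in>I. f (g i) x \<le> f (g j) x)" by blast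
  obtain r :: "nat \<Rightarrow> nat" where r: "strict_mono r" "\<forall>i j. i \<le> j \<longrightarrow> f (g (r i)) a \<le> f (g (r j)) a"
    using nat_seq_incr_sub[of "\<lambda>n. f (g n) a"] by blast
  have "strict_mono (g \<circ> r)" using g(1) r(1) unfolding strict_mono_def by simp
  moreover have "\<forall>i j. i \<le> j \<longrightarrow> (\<forall>x\<in>insert a I. f ((g \<circ> r) i) x \<le> f ((g \<circ> r) j) x)"
  proof (intro allI impI ballI)
    fix i j :: nat and x assume ij: "i \<le> j" and x: "x \<in> insert a I"
    have "r i \<le> r j" using r(1) ij by (simp add: strict_mono_less_eq)
    then show "f ((g \<circ> r) i) x \<le> f ((g \<circ> r) j) x"
      using g(2) r(2) ij x by auto
  qed
  ultimately show ?case by blast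
qed

lemma dickson:
  fixes f :: "nat \<Rightarrow> ('k::finite \<Rightarrow> nat)"
  shows "\<exists>i j. i < j \<and> f i \<le> f j"
proof -
  obtain g :: "nat \<Rightarrow> nat" where g: "strict_mono g" "\<forall>i j. i \<le> j \<longrightarrow> (\<forall>x\<in>UNIV. f (g i) x \<le> f (g j) x)"
    using dickson_sub[of UNIV f] by auto
  have "g 0 < g 1" using g(1) by (simp add: strict_mono_def)
  moreover have "f (g 0) \<le> f (g 1)" using g(2) by (auto simp: le_fun_def)
  ultimately show ?thesis by blast
qed

lemma fun_le_add_diff:
  fixes u s :: "'k \<Rightarrow> nat"
  assumes "u \<le> s" shows "u + (s - u) = s"
  using assms by (auto simp: fun_eq_iff le_fun_def)

lemma min_exists:
  fixes X :: "('k::finite \<Rightarrow> nat) set"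
  assumes "x \<in> X" shows "\<exists>m\<in>minimal_elems X. m \<le> x"
proof -
  obtain y where y: "y \<in> X \<and> y \<le> x" "\<forall>z. z \<in> X \<and> z \<le> x \<longrightarrow> sum y UNIV \<le> sum z UNIV"
    using ex_has_least_nat[of "\<lambda>y. y \<in> X \<and> y \<le> x" x "\<lambda>y. sum y UNIV"] assms by auto
  have "y \<in> minimal_elems X"
    unfolding minimal_elems_def
  proof (safe)
    show "y \<in> X" using y by simp
    fix z assume z: "z \<in> X" "z \<le> y"
    show "z = y"
    proof (rule ccontr)
      assume "z \<noteq> y"
      then obtain a where "z a \<noteq> y a" by (auto simp: fun_eq_iff)
      then have "z a < y a" using z(2) by (simp add: le_fun_def le_neq_implies_less)
      then have "sum z UNIV < sum y UNIV"
        using z(2) by (intro sum_strict_mono_ex1) (auto simp: le_fun_def)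
      moreover have "z \<le> x" using z(2) y(1) order_trans by blast
      ultimately show False using y(2) z(1) by fastforce
    qed
  qed
  then show ?thesis using y(1) by blast
qed

lemma min_finite:
  fixes X :: "('k::finite \<Rightarrow> nat) set"
  shows "finite (minimal_elems X)"
proof (rule ccontr)
  assume "infinite (minimal_elems X)"
  then obtain f :: "nat \<Rightarrow> _" where f: "inj f" "range f \<subseteq> minimal_elems X"
    using infinite_countable_subset by blast
  obtain i j where ij: "i < j" "f i \<le> f j" using dickson by blast
  have "f i \<in> X" "f j \<in> minimal_elems X" using f(2) by (auto simp: minimal_elems_def)
  then have "f i = f j" using ij(2) by (auto simp: minimal_elems_def)
  then show False using f(1) ij(1) by (auto dest: injD)
qed

definition up :: "('k \<Rightarrow> nat) set \<Rightarrow> ('k \<Rightarrow> nat) set" where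
  "up X = {x. \<exists>y\<in>X. y \<le> x}"

lemma minimal_up: "minimal_elems (up X) = minimal_elems X"
  unfolding minimal_elems_def up_def
  by (auto intro: order_trans)

lemma up_wf:
  fixes B :: "'a \<Rightarrow> ('k::finite \<Rightarrow> nat) set"
  shows "wf {(w, u). up (B u) \<subset> up (B w)}"
proof -
  {
    fix f :: "nat \<Rightarrow> 'a"
    assume ch0: "\<forall>i. (f (Suc i), f i) \<in> {(w, u). up (B u) \<subset> up (B w)}"
    then have ch: "\<forall>i. up (B (f i)) \<subset> up (B (f (Suc i)))" by simp
    define A where "A i = up (B (f i))" for i
    have mono: "A i \<subseteq> A j" if "i \<le> j" for i j
      using lift_Suc_mono_le[of A i j] ch that unfolding A_def by auto
    have "\<forall>i. \<exists>x. x \<in> A (Suc i) - A i" using ch unfolding A_def by blast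
    then obtain x where x: "\<forall>i. x i \<in> A (Suc i) - A i" by metis
    obtain i j where ij: "i < j" "x i \<le> x j" using dickson by blast
    have "x i \<in> A j" using x mono[of "Suc i" j] ij(1) by auto
    then have "x j \<in> A j" using ij(2) unfolding A_def up_def by (auto intro: order_trans)
    then have False using x by auto
  }
  then show ?thesis unfolding wf_iff_no_infinite_down_chain by blast
qed

lemma shift_add:
  assumes "slice S" "u \<in> S" "v \<in> shift S u" "w \<in> shift S u"
  shows "v + w \<in> shift S u"
  using assms unfolding slice_def shift_def by (simp add: add.assoc[symmetric])

lemma M_sub:
  assumes "slice S" "u \<in> S"
  shows "M_of S u \<subseteq> shift S u"
proof
  fix x assume "x \<in> M_of S u"
  then have "x \<in> submonoid_gen (minimal_elems (shift S u - {0}))" by (simp add: M_of_def)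
  then show "x \<in> shift S u"
  proof (induction rule: submonoid_gen.induct)
    case zero then show ?case using assms by (metis add.right_neutral mem_Collect_eq shift_def)
  next
    case (gen x) then show ?case by (simp add: minimal_elems_def)
  next
    case (add a b) then show ?case using shift_add assms by blast
  qed
qed

lemma shift_mono:
  fixes S :: "('k \<Rightarrow> nat) set"
  assumes "slice S" "u \<in> S" "u' \<in> S" "u \<le> u'"
  shows "shift S u \<subseteq> shift S u'"
proof
  fix v assume v: "v \<in> shift S u"
  have e: "u + (u' - u) = u'" using fun_le_add_diff assms(4) .
  have h1: "u + (u' - u) \<in> S" using e assms(3) by simp
  have h2: "u + v \<in> S" using v by (simp add: shift_def)
  have "u + (u' - u) + v \<in> S" using assms(1)[unfolded slice_def, rule_format, OF assms(2) h1 h2] .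
  then show "v \<in> shift S u'" using e by (simp add: shift_def)
qed

definition UU :: "('k \<Rightarrow> nat) set \<Rightarrow> ('k \<Rightarrow> nat) \<Rightarrow> ('k \<Rightarrow> nat) set" where
  "UU S u = up (shift S u - {0})"

lemma UU_mono:
  assumes "slice S" "u \<in> S" "u' \<in> S" "u \<le> u'"
  shows "UU S u \<subseteq> UU S u'"
  using shift_mono[OF assms] unfolding UU_def up_def by blast

lemma path_lemma:
  fixes S :: "('k::finite \<Rightarrow> nat) set"
  assumes sl: "slice S" and uS: "u \<in> S" and sS: "s \<in> S"
    and st: "\<forall>w\<in>S. u \<le> w \<and> w \<le> s \<longrightarrow> UU S w = UU S u"
  shows "w \<in> S \<Longrightarrow> u \<le> w \<Longrightarrow> w \<le> s \<Longrightarrow> w - u \<in> M_of S u \<Longrightarrow> s - u \<in> M_of S u"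
proof (induction "sum (s - w) UNIV" arbitrary: w rule: less_induct)
  case less
  show ?case
  proof (cases "w = s")
    case True then show ?thesis using less.prems by simp
  next
    case False
    define d where "d = s - w"
    have wd: "w + d = s" using fun_le_add_diff[OF less.prems(3)] d_def by simp
    have d0: "d \<noteq> 0" using wd False by auto
    have dS: "d \<in> shift S w - {0}" using wd d0 sS by (simp add: shift_def)
    obtain p where p: "p \<in> minimal_elems (shift S w - {0})" "p \<le> d"
      using min_exists[OF dS] by blast
    have "UU S w = UU S u" using st less.prems by blast
    then have "minimal_elems (shift S w - {0}) = minimal_elems (shift S u - {0})"
      unfolding UU_def by (metis minimal_up)
    then have pM: "p \<in> M_of S u" using p(1) unfolding M_of_def by (simp add: submonoid_gen.gen)
    have pS: "p \<in> shift S w" "p \<noteq> 0" using p(1) by (auto simp: minimal_elems_def)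
    define w' where "w' = w + p"
    have w'S: "w' \<in> S" using pS unfolding w'_def shift_def by simp
    have uw': "u \<le> w'" using less.prems(2) unfolding w'_def by (auto simp: le_fun_def intro: trans_le_add1)
    have w's: "w' \<le> s" unfolding le_fun_def
    proof
      fix x
      have "p x \<le> d x" using p(2) by (simp add: le_fun_def)
      moreover have "w x + d x = s x" using wd by (simp add: fun_eq_iff)
      ultimately show "w' x \<le> s x" unfolding w'_def by simp
    qed
    have "w' - u = (w - u) + p" using less.prems(2) unfolding w'_def by (auto simp: le_fun_def fun_eq_iff)
    then have w'M: "w' - u \<in> M_of S u" using less.prems(4) pM unfolding M_of_def
      by (simp add: submonoid_gen.add)
    obtain a where a: "p a \<noteq> 0" using pS(2) by (auto simp: fun_eq_iff)
    have "sum (s - w') UNIV < sum (s - w) UNIV"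
    proof (rule sum_strict_mono_ex1)
      show "\<forall>x\<in>UNIV. (s - w') x \<le> (s - w) x" unfolding w'_def by (simp add: diff_le_mono2)
      show "\<exists>x\<in>UNIV. (s - w') x < (s - w) x"
      proof (rule bexI[of _ a])
        have "p a \<le> s a - w a" using p(2) unfolding d_def by (simp add: le_fun_def)
        then show "(s - w') a < (s - w) a" using a unfolding w'_def by simp
      qed simp
    qed simp
    then show ?thesis using less.hyps[OF _ w'S uw' w's w'M] by simp
  qed
qed

lemma cover_up:
  fixes S :: "('k::finite \<Rightarrow> nat) set"
  assumes sl: "slice S"
  shows "u \<in> S \<longrightarrow> (\<exists>F. finite F \<and> F \<subseteq> S \<and> {s\<in>S. u \<le> s} \<subseteq> (\<Union>v\<in>F. (\<lambda>x. v + x) ` M_of S v))"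
proof (induction u rule: wf_induct[OF up_wf[of "\<lambda>u. shift S u - {0}"]])
  case (1 u)
  show ?case
  proof
    assume uS: "u \<in> S"
    define W where "W = {w \<in> S. u \<le> w \<and> UU S w \<noteq> UU S u}"
    define Mn where "Mn = minimal_elems W"
    have fin: "finite Mn" unfolding Mn_def by (rule min_finite)
    have "\<forall>w\<in>Mn. \<exists>G. finite G \<and> G \<subseteq> S \<and> {s\<in>S. w \<le> s} \<subseteq> (\<Union>v\<in>G. (\<lambda>x. v + x) ` M_of S v)"
    proof
      fix w assume "w \<in> Mn"
      then have wW: "w \<in> W" unfolding Mn_def minimal_elems_def by simp
      then have "UU S u \<subset> UU S w" using UU_mono[OF sl uS] unfolding W_def by blast
      then have wu: "(w, u) \<in> {(w, u). up (shift S u - {0}) \<subset> up (shift S w - {0})}"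
        unfolding UU_def by simp
      then show "\<exists>G. finite G \<and> G \<subseteq> S \<and> {s\<in>S. w \<le> s} \<subseteq> (\<Union>v\<in>G. (\<lambda>x. v + x) ` M_of S v)"
        using 1[rule_format, OF wu] wW unfolding W_def by simp
    qed
    from bchoice[OF this] obtain G where G: "\<forall>w\<in>Mn. finite (G w) \<and> G w \<subseteq> S \<and> {s\<in>S. w \<le> s} \<subseteq> (\<Union>v\<in>G w. (\<lambda>x. v + x) ` M_of S v)"
      by blast
    define F where "F = insert u (\<Union>(G ` Mn))"
    have "finite F" unfolding F_def using fin G by auto
    moreover have "F \<subseteq> S" unfolding F_def using G uS by auto
    moreover have "{s\<in>S. u \<le> s} \<subseteq> (\<Union>v\<in>F. (\<lambda>x. v + x) ` M_of S v)"
    proof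
      fix s assume s: "s \<in> {s\<in>S. u \<le> s}"
      show "s \<in> (\<Union>v\<in>F. (\<lambda>x. v + x) ` M_of S v)"
      proof (cases "\<exists>w\<in>W. w \<le> s")
        case True
        then obtain w where w: "w \<in> W" "w \<le> s" by blast
        then obtain m where m: "m \<in> Mn" "m \<le> w" using min_exists unfolding Mn_def by blast
        then have "m \<le> s" using w(2) order_trans by blast
        then have "s \<in> (\<Union>v\<in>G m. (\<lambda>x. v + x) ` M_of S v)" using G m(1) s by blast
        then show ?thesis using m(1) unfolding F_def by blast
      next
        case False
        then have st: "\<forall>w\<in>S. u \<le> w \<and> w \<le> s \<longrightarrow> UU S w = UU S u" unfolding W_def by blast
        have "u - u \<in> M_of S u" by (simp add: M_of_def submonoid_gen.zero)
        then have "s - u \<in> M_of S u"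
          using path_lemma[OF sl uS _ st, of u] s uS by simp
        moreover have "s = u + (s - u)" using fun_le_add_diff[of u s] s by simp
        ultimately show ?thesis unfolding F_def by blast
      qed
    qed
    ultimately show "\<exists>F. finite F \<and> F \<subseteq> S \<and> {s\<in>S. u \<le> s} \<subseteq> (\<Union>v\<in>F. (\<lambda>x. v + x) ` M_of S v)"
      by blast
  qed
qed

theorem lemma6:
  fixes S :: "('k::finite \<Rightarrow> nat) set"
  assumes "slice S"
  shows "\<exists>F. finite F \<and> F \<subseteq> S \<and> S = (\<Union>u\<in>F. (\<lambda>v. u + v) ` M_of S u)"
proof -
  define Mn where "Mn = minimal_elems S"
  have fin: "finite Mn" unfolding Mn_def by (rule min_finite)
  have "\<forall>w\<in>Mn. \<exists>G. finite G \<and> G \<subseteq> S \<and> {s\<in>S. w \<le> s} \<subseteq> (\<Union>v\<in>G. (\<lambda>x. v + x) ` M_of S v)"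
    using cover_up[OF assms] unfolding Mn_def minimal_elems_def by blast
  from bchoice[OF this] obtain G where G: "\<forall>w\<in>Mn. finite (G w) \<and> G w \<subseteq> S \<and> {s\<in>S. w \<le> s} \<subseteq> (\<Union>v\<in>G w. (\<lambda>x. v + x) ` M_of S v)"
    by blast
  define F where "F = \<Union>(G ` Mn)"
  have "finite F" unfolding F_def using fin G by auto
  moreover have FS: "F \<subseteq> S" unfolding F_def using G by auto
  moreover have "S \<subseteq> (\<Union>u\<in>F. (\<lambda>v. u + v) ` M_of S u)"
  proof
    fix s assume s: "s \<in> S"
    then obtain m where m: "m \<in> Mn" "m \<le> s" using min_exists unfolding Mn_def by blast
    then have "s \<in> (\<Union>v\<in>G m. (\<lambda>x. v + x) ` M_of S v)" using G s by blast
    then show "s \<in> (\<Union>u\<in>F. (\<lambda>v. u + v) ` M_of S u)" using m(1) unfolding F_def by blast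
  qed
  moreover have "(\<Union>u\<in>F. (\<lambda>v. u + v) ` M_of S u) \<subseteq> S"
  proof
    fix x assume "x \<in> (\<Union>u\<in>F. (\<lambda>v. u + v) ` M_of S u)"
    then obtain u v where "u \<in> F" "v \<in> M_of S u" "x = u + v" by blast
    then show "x \<in> S" using M_sub[OF assms] FS by (auto simp: shift_def)
  qed
  ultimately show ?thesis by blast
qed

end
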